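(* Let $\alpha\ge\tfrac12$. There is a constant $C>0$ depending only on $\alpha$ such that for every $f\in(L^\infty,\ell^1)(\mathbb{R}_+,*_\alpha)$ and every $y\in\mathbb{R}_+$, $\|\tau_yf\|_{\infty,1}\le C\,\|f\|_{\infty,1}.$
   Context: Fix $\alpha\geq\tfrac12$. The Bessel–Kingman hypergroup is $(\mathbb{R}_+,*_\alpha)$ with Haar measure $\omega_\alpha(dz)=z^{2\alpha+1}dz$ and, for $x,y>0$, $\varepsilon_x*_\alpha\varepsilon_y(f)=\int_{|x-y|}^{x+y}K_\alpha(x,y,z)f(z)z^{2\alpha+1}dz$ with $K_\alpha(x,y,z)=C_\Gamma\frac{[(z^2-(x-y)^2)((x+y)^2-z^2)]^{\alpha-1/2}}{(xyz)^{2\alpha}}$, $C_\Gamma=\frac{\Gamma(\alpha+1)}{\Gamma(1/2)\Gamma(\alpha+1/2)2^{2\alpha-1}}$; $\varepsilon_0$ is the identity. Translation: $\tau_yf(x)=\varepsilon_x*_\alpha\varepsilon_y(f)$. Let $I_n=[n-1,n)$, $\omega_n=\omega_\alpha(I_n)$, $\|f\|_{\infty,1}=\sum_{n\ge1}\omega_n\sup_{x\in I_n}|f(x)|$, and $(L^\infty,\ell^1)(\mathbb{R}_+,*_\alpha)=\{f \text{ measurable}:\|f\|_{\infty,1}<\infty\}$. *)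

theory Defs
  imports "HOL-Analysis.Analysis"
begin

definition CGamma :: "real \<Rightarrow> real" where
  "CGamma \<alpha> = Gamma (\<alpha> + 1) / (Gamma (1/2) * Gamma (\<alpha> + 1/2) * 2 powr (2*\<alpha> - 1))"

definition BK_kernel :: "real \<Rightarrow> real \<Rightarrow> real \<Rightarrow> real \<Rightarrow> real" where
  "BK_kernel \<alpha> x y z =
     CGamma \<alpha> * ((z\<^sup>2 - (x - y)\<^sup>2) * ((x + y)\<^sup>2 - z\<^sup>2)) powr (\<alpha> - 1/2)
       / (x * y * z) powr (2 * \<alpha>)"

text \<open>Generalized translation tau_y f (x) = (eps_x *_alpha eps_y)(f), for x, y >= 0;
  eps_0 is the identity of the hypergroup.\<close>
definition BK_transl :: "real \<Rightarrow> real \<Rightarrow> (real \<Rightarrow> complex) \<Rightarrow> real \<Rightarrow> complex" where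
  "BK_transl \<alpha> y f x =
     (if x = 0 then f y
      else if y = 0 then f x
      else (LBINT z=\<bar>x - y\<bar>..x + y.
              complex_of_real (BK_kernel \<alpha> x y z * z powr (2 * \<alpha> + 1)) * f z))"

text \<open>omega_n = Haar measure of I_n = [n-1, n), indexed here by n = Suc k.\<close>
definition BK_omega :: "real \<Rightarrow> nat \<Rightarrow> real" where
  "BK_omega \<alpha> n = (LBINT z=real n - 1..real n. z powr (2 * \<alpha> + 1))"

definition BK_norm :: "real \<Rightarrow> (real \<Rightarrow> complex) \<Rightarrow> ennreal" where
  "BK_norm \<alpha> f = (\<Sum>k. ennreal (BK_omega \<alpha> (Suc k)) *
       (SUP x\<in>{real (Suc k) - 1..<real (Suc k)}. ennreal (cmod (f x))))"

end

theory Submission imports Defs begin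

definition p0 :: "real \<Rightarrow> real \<Rightarrow> real \<Rightarrow> real \<Rightarrow> real" where
  "p0 \<alpha> x y z = BK_kernel \<alpha> x y z * z powr (2 * \<alpha> + 1)"

lemma CGamma_nonneg: "\<alpha> \<ge> 1/2 \<Longrightarrow> CGamma \<alpha> \<ge> 0"
  unfolding CGamma_def by (intro divide_nonneg_pos mult_pos_pos) auto

lemma p0_form:
  assumes "x > 0" "y > 0" "z > 0"
  shows "p0 \<alpha> x y z = CGamma \<alpha> * ((z\<^sup>2 - (x - y)\<^sup>2) * ((x + y)\<^sup>2 - z\<^sup>2)) powr (\<alpha> - 1/2) * z / (x*y) powr (2*\<alpha>)"
proof -
  have "(x*y*z) powr (2*\<alpha>) = (x*y) powr (2*\<alpha>) * z powr (2*\<alpha>)"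
    using assms by (simp add: powr_mult)
  moreover have "z powr (2*\<alpha>+1) = z powr (2*\<alpha>) * z"
    using assms by (simp add: powr_add)
  moreover have "z powr (2*\<alpha>) > 0" using assms by simp
  ultimately show ?thesis unfolding p0_def BK_kernel_def by (simp add: field_simps)
qed

lemma br_bounds:
  fixes x y z :: real
  assumes "x > 0" "y > 0" "\<bar>x - y\<bar> < z" "z < x + y"
  shows "0 \<le> z\<^sup>2 - (x - y)\<^sup>2" "z\<^sup>2 - (x - y)\<^sup>2 \<le> 4*x*y" "z\<^sup>2 - (x - y)\<^sup>2 \<le> z\<^sup>2"
        "0 \<le> (x + y)\<^sup>2 - z\<^sup>2" "(x + y)\<^sup>2 - z\<^sup>2 \<le> 4*x*y"
proof -
  have z0: "z > 0" using assms abs_ge_zero[of "x-y"] by linarith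
  have "(x-y)\<^sup>2 = \<bar>x-y\<bar>\<^sup>2" by simp
  also have "\<dots> \<le> z\<^sup>2" using assms by (intro power_mono) auto
  finally show "0 \<le> z\<^sup>2 - (x - y)\<^sup>2" by simp
  have "z\<^sup>2 \<le> (x+y)\<^sup>2" using assms z0 by (intro power_mono) auto
  then show "z\<^sup>2 - (x - y)\<^sup>2 \<le> 4*x*y" "0 \<le> (x + y)\<^sup>2 - z\<^sup>2"
    by (auto simp: power2_eq_square algebra_simps)
  show "z\<^sup>2 - (x - y)\<^sup>2 \<le> z\<^sup>2" by simp
  show "(x + y)\<^sup>2 - z\<^sup>2 \<le> 4*x*y" using \<open>0 \<le> z\<^sup>2 - (x - y)\<^sup>2\<close>
    by (auto simp: power2_eq_square algebra_simps)
qed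

lemma p0_D1:
  assumes a: "\<alpha> \<ge> 1/2" and "x > 0" "y > 0" "\<bar>x - y\<bar> < z" "z < x + y"
  shows "p0 \<alpha> x y z \<le> CGamma \<alpha> * 4 powr (2*\<alpha>-1) * z / (x*y)"
proof -
  note b = br_bounds[OF assms(2-5)]
  have z0: "z > 0" using assms abs_ge_zero[of "x-y"] by linarith
  define br where "br = (z\<^sup>2 - (x - y)\<^sup>2) * ((x + y)\<^sup>2 - z\<^sup>2)"
  have br0: "br \<ge> 0" using b unfolding br_def by simp
  have "br \<le> (4*x*y) * (4*x*y)" unfolding br_def using b assms by (intro mult_mono) auto
  then have "br powr (\<alpha> - 1/2) \<le> ((4*x*y) * (4*x*y)) powr (\<alpha> - 1/2)"
    using br0 a by (intro powr_mono2) auto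
  also have "\<dots> = (4*x*y) powr (\<alpha> - 1/2) * (4*x*y) powr (\<alpha> - 1/2)"
    using assms by (intro powr_mult)
  also have "\<dots> = (4*x*y) powr ((\<alpha> - 1/2) + (\<alpha> - 1/2))"
    by (rule powr_add[symmetric])
  also have "\<dots> = (4*x*y) powr (2*\<alpha> - 1)"
    by (rule arg_cong[where f="\<lambda>t. (4*x*y) powr t"]) simp
  also have "\<dots> = 4 powr (2*\<alpha>-1) * (x*y) powr (2*\<alpha>) / (x*y)"
    using assms by (simp add: powr_mult powr_diff mult.assoc)
  finally have *: "br powr (\<alpha> - 1/2) \<le> 4 powr (2*\<alpha>-1) * (x*y) powr (2*\<alpha>) / (x*y)" .
  have "p0 \<alpha> x y z = CGamma \<alpha> * br powr (\<alpha> - 1/2) * z / (x*y) powr (2*\<alpha>)"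
    unfolding br_def using assms z0 by (simp add: p0_form)
  also have "\<dots> \<le> CGamma \<alpha> * (4 powr (2*\<alpha>-1) * (x*y) powr (2*\<alpha>) / (x*y)) * z / (x*y) powr (2*\<alpha>)"
    using * z0 CGamma_nonneg[OF a] assms
    by (intro divide_right_mono mult_right_mono mult_left_mono) auto
  also have "\<dots> = CGamma \<alpha> * 4 powr (2*\<alpha>-1) * z / (x*y)"
    using assms by simp
  finally show ?thesis .
qed

lemma p0_D2:
  assumes a: "\<alpha> \<ge> 1/2" and "x > 0" "y > 0" "\<bar>x - y\<bar> < z" "z < x + y"
  shows "p0 \<alpha> x y z \<le> CGamma \<alpha> * 4 powr (\<alpha>-1/2) * z powr (2*\<alpha>) / (x*y) powr (\<alpha>+1/2)"
proof -
  note b = br_bounds[OF assms(2-5)]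
  have z0: "z > 0" using assms abs_ge_zero[of "x-y"] by linarith
  define br where "br = (z\<^sup>2 - (x - y)\<^sup>2) * ((x + y)\<^sup>2 - z\<^sup>2)"
  have br0: "br \<ge> 0" using b unfolding br_def by simp
  have "br \<le> z\<^sup>2 * (4*x*y)" unfolding br_def using b assms by (intro mult_mono) auto
  then have "br powr (\<alpha> - 1/2) \<le> (z\<^sup>2 * (4*x*y)) powr (\<alpha> - 1/2)"
    using br0 a by (intro powr_mono2) auto
  also have "\<dots> = z powr (2*\<alpha> - 1) * 4 powr (\<alpha>-1/2) * (x*y) powr (\<alpha>-1/2)"
  proof -
    have "(z\<^sup>2 * (4*x*y)) powr (\<alpha> - 1/2) = (z\<^sup>2) powr (\<alpha> - 1/2) * (4*(x*y)) powr (\<alpha> - 1/2)"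
      using assms by (subst powr_mult) (auto simp: mult.assoc)
    also have "(z\<^sup>2) powr (\<alpha> - 1/2) = z powr (2*\<alpha> - 1)"
    proof -
      have "(z\<^sup>2) = z powr 2" using z0 by (simp add: powr_numeral)
      then have "(z\<^sup>2) powr (\<alpha> - 1/2) = z powr (2 * (\<alpha> - 1/2))" by (simp add: powr_powr)
      also have "2 * (\<alpha> - 1/2) = 2*\<alpha> - 1" by simp
      finally show ?thesis .
    qed
    also have "(4*(x*y)) powr (\<alpha> - 1/2) = 4 powr (\<alpha>-1/2) * (x*y) powr (\<alpha>-1/2)"
      using assms by (intro powr_mult)
    finally show ?thesis by (simp add: mult.assoc)
  qed
  finally have *: "br powr (\<alpha> - 1/2) \<le> z powr (2*\<alpha> - 1) * 4 powr (\<alpha>-1/2) * (x*y) powr (\<alpha>-1/2)" .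
  have "p0 \<alpha> x y z = CGamma \<alpha> * br powr (\<alpha> - 1/2) * z / (x*y) powr (2*\<alpha>)"
    unfolding br_def using assms z0 by (simp add: p0_form)
  also have "\<dots> \<le> CGamma \<alpha> * (z powr (2*\<alpha> - 1) * 4 powr (\<alpha>-1/2) * (x*y) powr (\<alpha>-1/2)) * z / (x*y) powr (2*\<alpha>)"
    using * z0 CGamma_nonneg[OF a] assms
    by (intro divide_right_mono mult_right_mono mult_left_mono) auto
  also have "\<dots> = CGamma \<alpha> * 4 powr (\<alpha>-1/2) * (z powr (2*\<alpha> - 1) * z) * ((x*y) powr (\<alpha>-1/2) / (x*y) powr (2*\<alpha>))"
    by simp
  also have "z powr (2*\<alpha> - 1) * z = z powr (2*\<alpha>)"
    using z0 by (simp add: powr_add[symmetric] powr_diff)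
  also have "(x*y) powr (\<alpha>-1/2) / (x*y) powr (2*\<alpha>) = 1 / (x*y) powr (\<alpha>+1/2)"
    using assms by (simp add: powr_diff[symmetric] powr_minus_divide[symmetric] algebra_simps)
  finally show ?thesis by simp
qed


lemma p0_meas[measurable]: "(\<lambda>z. p0 \<alpha> x y z) \<in> borel_measurable borel"
  unfolding p0_def BK_kernel_def by measurable

definition nu :: "real \<Rightarrow> real \<Rightarrow> real \<Rightarrow> nat \<Rightarrow> ennreal" where
  "nu \<alpha> x y m = (if x = 0 then ennreal (indicator {real m - 1..<real m} y)
     else (\<integral>\<^sup>+z. ennreal (indicator ({\<bar>x-y\<bar><..<x+y} \<inter> {real m - 1..<real m}) z * p0 \<alpha> x y z) \<partial>lborel))"

lemma nn_bound_const:
  fixes g :: "real \<Rightarrow> real" and S :: "real set"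
  assumes "S \<subseteq> {a..b}" "a \<le> b" "\<And>z. z \<in> S \<Longrightarrow> g z \<le> M"
  shows "(\<integral>\<^sup>+z. ennreal (indicator S z * g z) \<partial>lborel) \<le> ennreal (M * (b - a))"
proof -
  have "(\<integral>\<^sup>+z. ennreal (indicator S z * g z) \<partial>lborel) \<le> (\<integral>\<^sup>+z. ennreal M * indicator {a..b} z \<partial>lborel)"
    apply (rule nn_integral_mono)
    using assms by (auto split: split_indicator simp: ennreal_leI)
  also have "\<dots> = ennreal M * ennreal (b - a)"
    using assms by (subst nn_integral_cmult_indicator) auto
  also have "\<dots> \<le> ennreal (M * (b - a))"
    by (cases "M \<ge> 0") (auto simp: ennreal_mult' ennreal_neg)
  finally show ?thesis .
qed

lemma nu_zero:
  assumes "x > 0" "\<not> (\<bar>x - y\<bar> < real m \<and> x + y > real m - 1)"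
  shows "nu \<alpha> x y m = 0"
proof -
  have "{\<bar>x-y\<bar><..<x+y} \<inter> {real m - 1..<real m} = {}" using assms by auto
  then show ?thesis using assms unfolding nu_def by simp
qed

lemma nu_total:
  assumes a: "\<alpha> \<ge> 1/2" and "x > 0" "y > 0"
  shows "nu \<alpha> x y m \<le> ennreal (4 * (CGamma \<alpha> * 4 powr (2*\<alpha>-1)))"
proof -
  define c1 where "c1 = CGamma \<alpha> * 4 powr (2*\<alpha>-1)"
  have c1: "c1 \<ge> 0" unfolding c1_def using CGamma_nonneg[OF a] by simp
  have "nu \<alpha> x y m = (\<integral>\<^sup>+z. ennreal (indicator ({\<bar>x-y\<bar><..<x+y} \<inter> {real m - 1..<real m}) z * p0 \<alpha> x y z) \<partial>lborel)"
    unfolding nu_def using assms by simp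
  also have "\<dots> \<le> ennreal (c1 * (x+y) / (x*y) * ((x+y) - \<bar>x-y\<bar>))"
  proof (rule nn_bound_const)
    fix z assume z: "z \<in> {\<bar>x-y\<bar><..<x+y} \<inter> {real m - 1..<real m}"
    then have "p0 \<alpha> x y z \<le> c1 * z / (x*y)" unfolding c1_def using assms by (intro p0_D1) auto
    also have "\<dots> \<le> c1 * (x+y) / (x*y)" using z assms c1 by (intro divide_right_mono mult_left_mono) auto
    finally show "p0 \<alpha> x y z \<le> c1 * (x+y) / (x*y)" .
  qed (use assms in auto)
  also have "c1 * (x+y) / (x*y) * ((x+y) - \<bar>x-y\<bar>) \<le> 4 * c1"
  proof -
    have "(x+y) * ((x+y) - \<bar>x-y\<bar>) \<le> 4 * (x*y)"
    proof (cases "x \<le> y")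
      case True
      have "x * x \<le> x * y" using True assms by (intro mult_left_mono) auto
      then show ?thesis using True by (simp add: abs_if algebra_simps)
    next
      case False
      have "y * y \<le> x * y" using False assms by (intro mult_right_mono) auto
      then show ?thesis using False by (simp add: abs_if algebra_simps)
    qed
    then have "(x+y) * ((x+y) - \<bar>x-y\<bar>) / (x*y) \<le> 4" using assms by (simp add: divide_le_eq)
    then have "c1 * ((x+y) * ((x+y) - \<bar>x-y\<bar>) / (x*y)) \<le> c1 * 4" using c1 by (rule mult_left_mono)
    then show ?thesis by (simp add: algebra_simps)
  qed
  finally show ?thesis unfolding c1_def by (simp add: ennreal_leI)
qed

lemma nu_M1:
  assumes a: "\<alpha> \<ge> 1/2" and "x > 0" "y > 0" "m \<ge> 1"
  shows "nu \<alpha> x y m \<le> ennreal (CGamma \<alpha> * 4 powr (2*\<alpha>-1) * real m / (x*y))"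
proof -
  define c1 where "c1 = CGamma \<alpha> * 4 powr (2*\<alpha>-1)"
  have c1: "c1 \<ge> 0" unfolding c1_def using CGamma_nonneg[OF a] by simp
  have "nu \<alpha> x y m = (\<integral>\<^sup>+z. ennreal (indicator ({\<bar>x-y\<bar><..<x+y} \<inter> {real m - 1..<real m}) z * p0 \<alpha> x y z) \<partial>lborel)"
    unfolding nu_def using assms by simp
  also have "\<dots> \<le> ennreal (c1 * real m / (x*y) * (real m - (real m - 1)))"
  proof (rule nn_bound_const)
    fix z assume z: "z \<in> {\<bar>x-y\<bar><..<x+y} \<inter> {real m - 1..<real m}"
    then have "p0 \<alpha> x y z \<le> c1 * z / (x*y)" unfolding c1_def using assms by (intro p0_D1) auto
    also have "\<dots> \<le> c1 * real m / (x*y)" using z assms c1 by (intro divide_right_mono mult_left_mono) auto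
    finally show "p0 \<alpha> x y z \<le> c1 * real m / (x*y)" .
  qed auto
  finally show ?thesis unfolding c1_def by simp
qed

lemma nu_M2:
  assumes a: "\<alpha> \<ge> 1/2" and "x > 0" "y > 0" "m \<ge> 1"
  shows "nu \<alpha> x y m \<le> ennreal (CGamma \<alpha> * 4 powr (\<alpha>-1/2) * real m powr (2*\<alpha>) / (x*y) powr (\<alpha>+1/2))"
proof -
  define c2 where "c2 = CGamma \<alpha> * 4 powr (\<alpha>-1/2)"
  have c2: "c2 \<ge> 0" unfolding c2_def using CGamma_nonneg[OF a] by simp
  have "nu \<alpha> x y m = (\<integral>\<^sup>+z. ennreal (indicator ({\<bar>x-y\<bar><..<x+y} \<inter> {real m - 1..<real m}) z * p0 \<alpha> x y z) \<partial>lborel)"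
    unfolding nu_def using assms by simp
  also have "\<dots> \<le> ennreal (c2 * real m powr (2*\<alpha>) / (x*y) powr (\<alpha>+1/2) * (real m - (real m - 1)))"
  proof (rule nn_bound_const)
    fix z assume z: "z \<in> {\<bar>x-y\<bar><..<x+y} \<inter> {real m - 1..<real m}"
    then have z0: "z > 0" using abs_ge_zero[of "x-y"] by auto
    from z have "p0 \<alpha> x y z \<le> c2 * z powr (2*\<alpha>) / (x*y) powr (\<alpha>+1/2)" unfolding c2_def using assms by (intro p0_D2) auto
    also have "\<dots> \<le> c2 * real m powr (2*\<alpha>) / (x*y) powr (\<alpha>+1/2)" using z z0 assms c2 by (intro divide_right_mono mult_left_mono powr_mono2) auto
    finally show "p0 \<alpha> x y z \<le> c2 * real m powr (2*\<alpha>) / (x*y) powr (\<alpha>+1/2)" .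
  qed auto
  finally show ?thesis unfolding c2_def by simp
qed

lemma omega_nn:
  fixes N :: nat and e :: real
  assumes "e > 0" "N \<ge> 1"
  shows "ennreal (LBINT z=real N - 1..real N. z powr e) = (\<integral>\<^sup>+z. ennreal (indicator {real N - 1<..<real N} z * z powr e) \<partial>lborel)"
proof -
  have "set_integrable lborel {real N - 1..real N} (\<lambda>z. z powr e)"
    apply (rule borel_integrable_atLeastAtMost')
    apply (rule continuous_on_powr') using assms by (auto intro!: continuous_intros)
  then have int: "set_integrable lborel {real N - 1<..<real N} (\<lambda>z. z powr e)"
    by (rule set_integrable_subset) auto
  have "(LBINT z=real N - 1..real N. z powr e) = (LINT z|lborel. indicator {real N - 1<..<real N} z * z powr e)"
    by (simp add: interval_lebesgue_integral_le_eq set_lebesgue_integral_def)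
  also have "ennreal \<dots> = (\<integral>\<^sup>+z. ennreal (indicator {real N - 1<..<real N} z * z powr e) \<partial>lborel)"
    apply (rule nn_integral_eq_integral[symmetric])
    using int unfolding set_integrable_def apply simp
    by (auto split: split_indicator)
  finally show ?thesis by simp
qed


lemma omega_upper:
  fixes N :: nat
  assumes "\<alpha> \<ge> 1/2" "N \<ge> 1"
  shows "BK_omega \<alpha> N \<le> real N powr (2*\<alpha>+1)"
proof -
  have "ennreal (BK_omega \<alpha> N) = (\<integral>\<^sup>+z. ennreal (indicator {real N - 1<..<real N} z * z powr (2*\<alpha>+1)) \<partial>lborel)"
    unfolding BK_omega_def using assms by (intro omega_nn) auto
  also have "\<dots> \<le> ennreal (real N powr (2*\<alpha>+1) * (real N - (real N - 1)))"
    apply (rule nn_bound_const) using assms by (auto intro!: powr_mono2)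
  finally show ?thesis by (subst (asm) ennreal_le_iff) auto
qed

lemma omega_lower:
  fixes N :: nat
  assumes "\<alpha> \<ge> 1/2" "N \<ge> 1"
  shows "BK_omega \<alpha> N \<ge> (real N / 2) powr (2*\<alpha>+1) / 2"
proof -
  have "ennreal ((real N / 2) powr (2*\<alpha>+1) / 2) = (\<integral>\<^sup>+z. ennreal ((real N / 2) powr (2*\<alpha>+1)) * indicator {real N - 1/2..real N} z \<partial>lborel)"
    by (subst nn_integral_cmult_indicator) (simp_all add: divide_ennreal_def[symmetric] ennreal_divide_numeral)
  also have "\<dots> \<le> (\<integral>\<^sup>+z. ennreal (indicator {real N - 1<..<real N} z * z powr (2*\<alpha>+1)) \<partial>lborel)"
  proof (rule nn_integral_mono_AE)
    have "AE z in lborel. z \<noteq> real N" by (rule AE_lborel_singleton)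
    then show "AE z in lborel. ennreal ((real N / 2) powr (2 * \<alpha> + 1)) * indicator {real N - 1 / 2..real N} z
         \<le> ennreal (indicator {real N - 1<..<real N} z * z powr (2 * \<alpha> + 1))"
    proof eventually_elim
      case (elim z)
      show ?case
      proof (cases "z \<in> {real N - 1 / 2..real N}")
        case True
        then have "(real N / 2) powr (2 * \<alpha> + 1) \<le> z powr (2 * \<alpha> + 1)"
          using assms by (intro powr_mono2) auto
        then show ?thesis using True elim by (auto simp: ennreal_leI)
      qed simp
    qed
  qed
  also have "\<dots> = ennreal (BK_omega \<alpha> N)"
    unfolding BK_omega_def using assms by (intro omega_nn[symmetric]) auto
  finally have *: "ennreal ((real N / 2) powr (2*\<alpha>+1) / 2) \<le> ennreal (BK_omega \<alpha> N)" .
  have "(real N / 2) powr (2*\<alpha>+1) / 2 > 0" using assms by auto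
  then show ?thesis using * by (metis ennreal_le_iff2 less_le_not_le)
qed

lemma ennr_step:
  fixes \<omega> B W \<Phi> :: real and \<nu> :: ennreal
  assumes "\<omega> \<ge> 0" "\<nu> \<le> ennreal B" "B \<ge> 0" "\<omega> \<le> W" "W * B \<le> \<Phi>"
  shows "ennreal \<omega> * \<nu> \<le> ennreal \<Phi>"
proof -
  have "ennreal \<omega> * \<nu> \<le> ennreal \<omega> * ennreal B" using assms by (intro mult_left_mono) auto
  also have "\<dots> = ennreal (\<omega> * B)" using assms by (simp add: ennreal_mult)
  also have "\<omega> * B \<le> W * B" using assms by (intro mult_right_mono)
  then have "ennreal (\<omega> * B) \<le> ennreal \<Phi>" using assms by (intro ennreal_leI) linarith
  finally show ?thesis .
qed

lemma R1:
  fixes x y c2 m \<alpha> :: real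
  assumes "x > 0" "y > 0" "x \<le> 2*y" "c2 \<ge> 0" "\<alpha> \<ge> 1/2"
  shows "(2*x) powr (2*\<alpha>+1) * (c2 * m powr (2*\<alpha>) / (x*y) powr (\<alpha>+1/2)) \<le> 2 powr (2*\<alpha>+1) * c2 * 2 powr (\<alpha>+1/2) * m powr (2*\<alpha>)"
proof -
  define \<beta> where "\<beta> = \<alpha> + 1/2"
  have e: "2*\<alpha>+1 = \<beta> + \<beta>" unfolding \<beta>_def by simp
  have "(2*x) powr (2*\<alpha>+1) = 2 powr (2*\<alpha>+1) * (x powr \<beta> * x powr \<beta>)"
    using assms by (simp only: e powr_add[symmetric] powr_mult)
  moreover have "(x*y) powr \<beta> = x powr \<beta> * y powr \<beta>" using assms by (simp add: powr_mult)
  ultimately have eq: "(2*x) powr (2*\<alpha>+1) * (c2 * m powr (2*\<alpha>) / (x*y) powr \<beta>) = 2 powr (2*\<alpha>+1) * c2 * m powr (2*\<alpha>) * (x powr \<beta> / y powr \<beta>)"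
    using assms by (simp add: field_simps)
  have "x powr \<beta> / y powr \<beta> = (x/y) powr \<beta>" using assms by (simp add: powr_divide)
  also have "\<dots> \<le> 2 powr \<beta>" using assms unfolding \<beta>_def by (intro powr_mono2) (auto simp: divide_le_eq)
  finally have "x powr \<beta> / y powr \<beta> \<le> 2 powr \<beta>" .
  then have "2 powr (2*\<alpha>+1) * c2 * m powr (2*\<alpha>) * (x powr \<beta> / y powr \<beta>) \<le> 2 powr (2*\<alpha>+1) * c2 * m powr (2*\<alpha>) * 2 powr \<beta>"
    using assms by (intro mult_left_mono) auto
  then show ?thesis using eq unfolding \<beta>_def by (simp add: algebra_simps)
qed

lemma R2:
  fixes x y c1 m \<alpha> :: real
  assumes "x > 0" "y > 0" "x < 2*m" "c1 \<ge> 0" "\<alpha> \<ge> 1/2"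
  shows "(2*x) powr (2*\<alpha>+1) * (c1 * m / (x*y)) \<le> 2 powr (2*\<alpha>+1) * 2 powr (2*\<alpha>) * c1 * m powr (2*\<alpha>+1) / y"
proof -
  have m0: "m > 0" using assms by simp
  have "(2*x) powr (2*\<alpha>+1) = 2 powr (2*\<alpha>+1) * (x powr (2*\<alpha>) * x)"
    using assms by (simp add: powr_mult powr_add)
  then have eq: "(2*x) powr (2*\<alpha>+1) * (c1 * m / (x*y)) = 2 powr (2*\<alpha>+1) * c1 * m * x powr (2*\<alpha>) / y"
    using assms by (simp add: field_simps)
  have "x powr (2*\<alpha>) \<le> (2*m) powr (2*\<alpha>)" using assms by (intro powr_mono2) auto
  also have "\<dots> = 2 powr (2*\<alpha>) * m powr (2*\<alpha>)" using m0 by (simp add: powr_mult)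
  finally have "2 powr (2*\<alpha>+1) * c1 * m * x powr (2*\<alpha>) / y \<le> 2 powr (2*\<alpha>+1) * c1 * m * (2 powr (2*\<alpha>) * m powr (2*\<alpha>)) / y"
    using assms m0 by (intro divide_right_mono mult_left_mono) auto
  also have "\<dots> = 2 powr (2*\<alpha>+1) * 2 powr (2*\<alpha>) * c1 * (m powr (2*\<alpha>) * m) / y" by (simp add: algebra_simps)
  also have "m powr (2*\<alpha>) * m = m powr (2*\<alpha>+1)" using m0 by (simp add: powr_add)
  finally show ?thesis using eq by simp
qed


definition c1 :: "real \<Rightarrow> real" where "c1 \<alpha> = CGamma \<alpha> * 4 powr (2*\<alpha>-1)"
definition c2 :: "real \<Rightarrow> real" where "c2 \<alpha> = CGamma \<alpha> * 4 powr (\<alpha>-1/2)"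
definition Kc :: "real \<Rightarrow> real" where
  "Kc \<alpha> = 1 + 4 * c1 \<alpha> + 4 * c1 \<alpha> * 3 powr (2*\<alpha>+1) + 2 powr (2*\<alpha>+1) * c2 \<alpha> * 2 powr (\<alpha>+1/2)
     + 2 powr (2*\<alpha>+1) * 2 powr (2*\<alpha>) * c1 \<alpha>"
definition Phi :: "real \<Rightarrow> real \<Rightarrow> nat \<Rightarrow> real" where
  "Phi \<alpha> y m = Kc \<alpha> * real m powr (2*\<alpha>+1) / max 1 (min y (real m))"
definition Win :: "real \<Rightarrow> nat \<Rightarrow> nat \<Rightarrow> bool" where
  "Win y m N \<longleftrightarrow> real N < y + real m + 1 \<and> real N > y - real m \<and> real N > real m - 1 - y"

lemma Kc_facts:
  assumes "\<alpha> \<ge> 1/2"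
  shows "c1 \<alpha> \<ge> 0" "c2 \<alpha> \<ge> 0" "1 \<le> Kc \<alpha>" "4 * c1 \<alpha> \<le> Kc \<alpha>" "4 * c1 \<alpha> * 3 powr (2*\<alpha>+1) \<le> Kc \<alpha>"
    "2 powr (2*\<alpha>+1) * c2 \<alpha> * 2 powr (\<alpha>+1/2) \<le> Kc \<alpha>"
    "2 powr (2*\<alpha>+1) * 2 powr (2*\<alpha>) * c1 \<alpha> \<le> Kc \<alpha>"
proof -
  show c1: "c1 \<alpha> \<ge> 0" "c2 \<alpha> \<ge> 0" unfolding c1_def c2_def using CGamma_nonneg[OF assms] by auto
  have a: "0 \<le> 4 * c1 \<alpha>" "0 \<le> 4 * c1 \<alpha> * 3 powr (2*\<alpha>+1)" "0 \<le> 2 powr (2*\<alpha>+1) * c2 \<alpha> * 2 powr (\<alpha>+1/2)"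
     "0 \<le> 2 powr (2*\<alpha>+1) * 2 powr (2*\<alpha>) * c1 \<alpha>" using c1 by auto
  then show "1 \<le> Kc \<alpha>" "4 * c1 \<alpha> \<le> Kc \<alpha>" "4 * c1 \<alpha> * 3 powr (2*\<alpha>+1) \<le> Kc \<alpha>"
    "2 powr (2*\<alpha>+1) * c2 \<alpha> * 2 powr (\<alpha>+1/2) \<le> Kc \<alpha>"
    "2 powr (2*\<alpha>+1) * 2 powr (2*\<alpha>) * c1 \<alpha> \<le> Kc \<alpha>" unfolding Kc_def by linarith+
qed

lemma Phi_ge:
  assumes a: "\<alpha> \<ge> 1/2" and m: "m \<ge> 1" and "K \<ge> 0"
  shows "K \<le> K * real m powr (2*\<alpha>+1) / max 1 (min y (real m))"
proof -
  have "max 1 (min y (real m)) \<le> real m" using m by auto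
  also have "real m = real m powr 1" using m by simp
  also have "\<dots> \<le> real m powr (2*\<alpha>+1)" using m a by (intro powr_mono) auto
  finally have "1 \<le> real m powr (2*\<alpha>+1) / max 1 (min y (real m))" by (simp add: le_divide_eq)
  then have "K * 1 \<le> K * (real m powr (2*\<alpha>+1) / max 1 (min y (real m)))" using assms by (intro mult_left_mono)
  then show ?thesis by simp
qed

lemma core:
  assumes a: "\<alpha> \<ge> 1/2" and y: "y > 0" and N: "N \<ge> 1" and m: "m \<ge> 1"
    and x: "real N - 1 \<le> x" "x < real N"
  shows "ennreal (BK_omega \<alpha> N) * nu \<alpha> x y m \<le> (if Win y m N then ennreal (Phi \<alpha> y m) else 0)"
proof -
  note K = Kc_facts[OF a]
  have om0: "BK_omega \<alpha> N \<ge> 0"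
    using omega_lower[OF a N] by (smt (verit) divide_nonneg_pos powr_ge_zero)
  have omU: "BK_omega \<alpha> N \<le> real N powr (2*\<alpha>+1)" by (rule omega_upper[OF a N])
  have x0: "x \<ge> 0" using x N by simp
  show ?thesis
  proof (cases "x = 0")
    case True
    show ?thesis
    proof (cases "y \<in> {real m - 1..<real m}")
      case False
      then show ?thesis using True unfolding nu_def by simp
    next
      case yin: True
      have N1: "N = 1" using x True N by linarith
      have W: "Win y m N" using yin N1 y unfolding Win_def by auto
      have "ennreal (BK_omega \<alpha> N) * nu \<alpha> x y m \<le> ennreal (Phi \<alpha> y m)"
      proof (rule ennr_step[OF om0, where B=1 and W=1])
        show "nu \<alpha> x y m \<le> ennreal 1" using True unfolding nu_def by (simp add: indicator_def)
        show "BK_omega \<alpha> N \<le> 1" using omU N1 by simp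
        show "1 * 1 \<le> Phi \<alpha> y m" unfolding Phi_def using Phi_ge[OF a m, of "Kc \<alpha>" y] K by linarith
      qed auto
      then show ?thesis using W by simp
    qed
  next
    case False
    then have xp: "x > 0" using x0 by simp
    show ?thesis
    proof (cases "\<bar>x - y\<bar> < real m \<and> x + y > real m - 1")
      case False
      then show ?thesis using nu_zero[OF xp False] by simp
    next
      case True
      have W: "Win y m N" using True x unfolding Win_def by (auto simp: abs_if split: if_splits)
      have "ennreal (BK_omega \<alpha> N) * nu \<alpha> x y m \<le> ennreal (Phi \<alpha> y m)"
      proof (cases "N = 1")
        case N1: True
        show ?thesis
        proof (rule ennr_step[OF om0, where B="4 * c1 \<alpha>" and W=1])
          show "nu \<alpha> x y m \<le> ennreal (4 * c1 \<alpha>)" using nu_total[OF a xp y] unfolding c1_def .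
          show "BK_omega \<alpha> N \<le> 1" using omU N1 by simp
          show "1 * (4 * c1 \<alpha>) \<le> Phi \<alpha> y m" unfolding Phi_def using Phi_ge[OF a m, of "Kc \<alpha>" y] K by linarith
        qed (use K in auto)
      next
        case N2: False
        then have x1: "x \<ge> 1" using x N by auto
        show ?thesis
        proof (cases "y \<le> 1")
          case y1: True
          have D: "max 1 (min y (real m)) = 1" using y1 m by auto
          have mr: "real m \<ge> 1" using m by simp
          have "x - y < real m" using True by (simp add: abs_less_iff)
          then have "real N \<le> 3 * real m" using x y1 mr by linarith
          then have "real N powr (2*\<alpha>+1) \<le> (3 * real m) powr (2*\<alpha>+1)" using N a by (intro powr_mono2) auto
          also have "\<dots> = 3 powr (2*\<alpha>+1) * real m powr (2*\<alpha>+1)" by (simp add: powr_mult)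
          finally have NB: "real N powr (2*\<alpha>+1) \<le> 3 powr (2*\<alpha>+1) * real m powr (2*\<alpha>+1)" .
          show ?thesis
          proof (rule ennr_step[OF om0, where B="4 * c1 \<alpha>" and W="3 powr (2*\<alpha>+1) * real m powr (2*\<alpha>+1)"])
            show "nu \<alpha> x y m \<le> ennreal (4 * c1 \<alpha>)" using nu_total[OF a xp y] unfolding c1_def .
            show "BK_omega \<alpha> N \<le> 3 powr (2*\<alpha>+1) * real m powr (2*\<alpha>+1)" using omU NB by linarith
            have "3 powr (2*\<alpha>+1) * real m powr (2*\<alpha>+1) * (4 * c1 \<alpha>) = (4 * c1 \<alpha> * 3 powr (2*\<alpha>+1)) * real m powr (2*\<alpha>+1)"
              by simp
            also have "\<dots> \<le> Kc \<alpha> * real m powr (2*\<alpha>+1)" using K by (intro mult_right_mono) auto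
            finally show "3 powr (2*\<alpha>+1) * real m powr (2*\<alpha>+1) * (4 * c1 \<alpha>) \<le> Phi \<alpha> y m"
              unfolding Phi_def D by simp
          qed (use K in auto)
        next
          case y1: False
          have NB: "real N powr (2*\<alpha>+1) \<le> (2*x) powr (2*\<alpha>+1)" using x x1 N a by (intro powr_mono2) auto
          show ?thesis
          proof (cases "x \<le> 2*y")
            case True
            show ?thesis
            proof (rule ennr_step[OF om0, where B="c2 \<alpha> * real m powr (2*\<alpha>) / (x*y) powr (\<alpha>+1/2)" and W="(2*x) powr (2*\<alpha>+1)"])
              show "nu \<alpha> x y m \<le> ennreal (c2 \<alpha> * real m powr (2*\<alpha>) / (x*y) powr (\<alpha>+1/2))"
                using nu_M2[OF a xp y m] unfolding c2_def .
              show "BK_omega \<alpha> N \<le> (2*x) powr (2*\<alpha>+1)" using omU NB by linarith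
              have "(2*x) powr (2*\<alpha>+1) * (c2 \<alpha> * real m powr (2*\<alpha>) / (x*y) powr (\<alpha>+1/2))
                  \<le> 2 powr (2*\<alpha>+1) * c2 \<alpha> * 2 powr (\<alpha>+1/2) * real m powr (2*\<alpha>)"
                by (rule R1) (use xp y True K a in auto)
              also have "\<dots> \<le> Kc \<alpha> * real m powr (2*\<alpha>)" using K by (intro mult_right_mono) auto
              also have "\<dots> \<le> Phi \<alpha> y m"
              proof -
                have D: "max 1 (min y (real m)) \<le> real m" "max 1 (min y (real m)) > 0" using m by auto
                have "Kc \<alpha> * real m powr (2*\<alpha>) * max 1 (min y (real m)) \<le> Kc \<alpha> * real m powr (2*\<alpha>) * real m"
                  using D K by (intro mult_left_mono) auto
                also have "\<dots> = Kc \<alpha> * real m powr (2*\<alpha>+1)" using m by (simp add: powr_add)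
                finally show ?thesis unfolding Phi_def using D by (simp add: le_divide_eq)
              qed
              finally show "(2*x) powr (2*\<alpha>+1) * (c2 \<alpha> * real m powr (2*\<alpha>) / (x*y) powr (\<alpha>+1/2)) \<le> Phi \<alpha> y m" .
            qed (use K xp y in auto)
          next
            case False
            have xm: "x < 2 * real m" and ym: "y < real m" using True False by (auto simp: abs_if split: if_splits)
            have D: "max 1 (min y (real m)) = y" using ym y1 by auto
            show ?thesis
            proof (rule ennr_step[OF om0, where B="c1 \<alpha> * real m / (x*y)" and W="(2*x) powr (2*\<alpha>+1)"])
              show "nu \<alpha> x y m \<le> ennreal (c1 \<alpha> * real m / (x*y))"
                using nu_M1[OF a xp y m] unfolding c1_def .
              show "BK_omega \<alpha> N \<le> (2*x) powr (2*\<alpha>+1)" using omU NB by linarith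
              have "(2*x) powr (2*\<alpha>+1) * (c1 \<alpha> * real m / (x*y))
                  \<le> 2 powr (2*\<alpha>+1) * 2 powr (2*\<alpha>) * c1 \<alpha> * real m powr (2*\<alpha>+1) / y"
                by (rule R2) (use xp y xm K a in auto)
              also have "\<dots> \<le> Kc \<alpha> * real m powr (2*\<alpha>+1) / y"
                using K y by (intro divide_right_mono mult_right_mono) auto
              finally show "(2*x) powr (2*\<alpha>+1) * (c1 \<alpha> * real m / (x*y)) \<le> Phi \<alpha> y m"
                unfolding Phi_def D .
            qed (use K xp y in auto)
          qed
        qed
      qed
      then show ?thesis using W by simp
    qed
  qed
qed


lemma card_between:
  fixes L U :: real
  assumes "L < U"
  shows "finite {n::nat. L < real n \<and> real n < U}" "real (card {n::nat. L < real n \<and> real n < U}) \<le> U - L + 1"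
proof -
  define S where "S = {n::nat. L < real n \<and> real n < U}"
  have sub: "S \<subseteq> {nat (\<lfloor>L\<rfloor>+1)..<nat \<lceil>U\<rceil>}"
  proof
    fix n assume "n \<in> S"
    then have n: "L < real n" "real n < U" unfolding S_def by auto
    have "real_of_int \<lfloor>L\<rfloor> < real n" using n of_int_floor_le[of L] by linarith
    then have "\<lfloor>L\<rfloor> < int n" by linarith
    moreover have "real n < real_of_int \<lceil>U\<rceil>" using n le_of_int_ceiling[of U] by linarith
    then have "int n < \<lceil>U\<rceil>" by linarith
    ultimately show "n \<in> {nat (\<lfloor>L\<rfloor>+1)..<nat \<lceil>U\<rceil>}" by auto
  qed
  then show "finite {n::nat. L < real n \<and> real n < U}" unfolding S_def[symmetric] by (rule finite_subset) simp
  have "card S \<le> nat \<lceil>U\<rceil> - nat (\<lfloor>L\<rfloor>+1)" using card_mono[OF _ sub] by simp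
  also have "\<dots> \<le> nat (\<lceil>U\<rceil> - (\<lfloor>L\<rfloor>+1))" by linarith
  finally have "real (card S) \<le> real (nat (\<lceil>U\<rceil> - (\<lfloor>L\<rfloor>+1)))" by linarith
  also have "\<dots> \<le> U - L + 1"
  proof -
    have c: "real_of_int \<lceil>U\<rceil> < U + 1" using ceiling_correct[of U] by linarith
    have f: "L < real_of_int \<lfloor>L\<rfloor> + 1" using floor_correct[of L] by linarith
    show ?thesis
    proof (cases "\<lceil>U\<rceil> - (\<lfloor>L\<rfloor>+1) \<ge> 0")
      case True
      then have "real (nat (\<lceil>U\<rceil> - (\<lfloor>L\<rfloor>+1))) = real_of_int \<lceil>U\<rceil> - real_of_int \<lfloor>L\<rfloor> - 1" by simp
      then show ?thesis using c f by linarith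
    next
      case False
      then show ?thesis using assms by simp
    qed
  qed
  finally show "real (card {n::nat. L < real n \<and> real n < U}) \<le> U - L + 1" unfolding S_def .
qed

lemma Win_set:
  assumes "y > 0" "m \<ge> 1"
  shows "finite {n. Win y m (Suc n)}" "real (card {n. Win y m (Suc n)}) \<le> 5 * max 1 (min y (real m))"
proof -
  define L where "L = max (y - real m - 1) (real m - 2 - y)"
  define U where "U = y + real m"
  have eq: "{n. Win y m (Suc n)} = {n::nat. L < real n \<and> real n < U}"
    unfolding Win_def L_def U_def by auto
  have LU: "L < U" unfolding L_def U_def using assms by auto
  show "finite {n. Win y m (Suc n)}" unfolding eq by (rule card_between[OF LU])
  have "real (card {n. Win y m (Suc n)}) \<le> U - L + 1" unfolding eq by (rule card_between[OF LU])
  also have "\<dots> \<le> 5 * max 1 (min y (real m))" unfolding L_def U_def using assms by (auto simp: max_def min_def)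
  finally show "real (card {n. Win y m (Suc n)}) \<le> 5 * max 1 (min y (real m))" .
qed

definition Cc :: "real \<Rightarrow> real" where "Cc \<alpha> = 1 + 10 * 2 powr (2*\<alpha>+1) * Kc \<alpha>"

lemma sum_bound:
  assumes a: "\<alpha> \<ge> 1/2" and y: "y > 0" and m: "m \<ge> 1"
  shows "(\<Sum>n. ennreal (BK_omega \<alpha> (Suc n)) * (SUP x\<in>{real (Suc n) - 1..<real (Suc n)}. nu \<alpha> x y m))
     \<le> ennreal (Cc \<alpha> * BK_omega \<alpha> m)"
proof -
  define S where "S = {n. Win y m (Suc n)}"
  note SS = Win_set[OF y m, folded S_def]
  have "(\<Sum>n. ennreal (BK_omega \<alpha> (Suc n)) * (SUP x\<in>{real (Suc n) - 1..<real (Suc n)}. nu \<alpha> x y m))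
      \<le> (\<Sum>n. if n \<in> S then ennreal (Phi \<alpha> y m) else 0)"
  proof (intro suminf_le summableI)
    fix n
    have "ennreal (BK_omega \<alpha> (Suc n)) * (SUP x\<in>{real (Suc n) - 1..<real (Suc n)}. nu \<alpha> x y m)
       = (SUP x\<in>{real (Suc n) - 1..<real (Suc n)}. ennreal (BK_omega \<alpha> (Suc n)) * nu \<alpha> x y m)"
      by (rule SUP_mult_left_ennreal)
    also have "\<dots> \<le> (if n \<in> S then ennreal (Phi \<alpha> y m) else 0)"
      unfolding S_def mem_Collect_eq
      by (rule SUP_least, rule core[OF a y _ m]) auto
    finally show "ennreal (BK_omega \<alpha> (Suc n)) * (SUP x\<in>{real (Suc n) - 1..<real (Suc n)}. nu \<alpha> x y m)
       \<le> (if n \<in> S then ennreal (Phi \<alpha> y m) else 0)" .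
  qed
  also have "(\<Sum>n. if n \<in> S then ennreal (Phi \<alpha> y m) else 0) = (\<Sum>n\<in>S. if n \<in> S then ennreal (Phi \<alpha> y m) else 0)"
    by (rule suminf_finite) (use SS in auto)
  also have "\<dots> = (\<Sum>n\<in>S. ennreal (Phi \<alpha> y m))" by simp
  also have "\<dots> = ennreal (real (card S) * Phi \<alpha> y m)"
    by (simp add: ennreal_of_nat_eq_real_of_nat ennreal_mult')
  also have "real (card S) * Phi \<alpha> y m \<le> Cc \<alpha> * BK_omega \<alpha> m"
  proof -
    note K = Kc_facts[OF a]
    define D where "D = max 1 (min y (real m))"
    have D0: "D > 0" unfolding D_def by auto
    have P0: "Phi \<alpha> y m \<ge> 0" unfolding Phi_def using K by auto
    have "real (card S) * Phi \<alpha> y m \<le> 5 * D * Phi \<alpha> y m" using SS P0 unfolding D_def by (intro mult_right_mono) auto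
    also have "\<dots> = 5 * Kc \<alpha> * real m powr (2*\<alpha>+1)" unfolding Phi_def D_def[symmetric] using D0 by simp
    also have "real m powr (2*\<alpha>+1) = 2 * 2 powr (2*\<alpha>+1) * ((real m / 2) powr (2*\<alpha>+1) / 2)"
      by (simp add: powr_divide)
    also have "(real m / 2) powr (2*\<alpha>+1) / 2 \<le> BK_omega \<alpha> m" by (rule omega_lower[OF a m])
    then have "5 * Kc \<alpha> * (2 * 2 powr (2*\<alpha>+1) * ((real m / 2) powr (2*\<alpha>+1) / 2)) \<le> 5 * Kc \<alpha> * (2 * 2 powr (2*\<alpha>+1) * BK_omega \<alpha> m)"
      using K by (intro mult_left_mono) auto
    also have "\<dots> = (10 * 2 powr (2*\<alpha>+1) * Kc \<alpha>) * BK_omega \<alpha> m" by simp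
    also have "\<dots> \<le> Cc \<alpha> * BK_omega \<alpha> m" unfolding Cc_def
    proof (intro mult_right_mono)
      have "0 \<le> (real m / 2) powr (2*\<alpha>+1) / 2" by simp
      then show "0 \<le> BK_omega \<alpha> m" using omega_lower[OF a m] by linarith
    qed simp
    finally show ?thesis .
  qed
  then have "ennreal (real (card S) * Phi \<alpha> y m) \<le> ennreal (Cc \<alpha> * BK_omega \<alpha> m)" by (rule ennreal_leI)
  finally show ?thesis .
qed


lemma suminf_swap_ennreal:
  fixes h :: "nat \<Rightarrow> nat \<Rightarrow> ennreal"
  shows "(\<Sum>n. \<Sum>k. h n k) = (\<Sum>k. \<Sum>n. h n k)"
proof -
  have "(\<Sum>n. \<Sum>k. h n k) = (\<integral>\<^sup>+n. (\<Sum>k. h n k) \<partial>count_space UNIV)"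
    by (rule nn_integral_count_space_nat[symmetric])
  also have "\<dots> = (\<Sum>k. \<integral>\<^sup>+n. h n k \<partial>count_space UNIV)"
    by (rule nn_integral_suminf) auto
  also have "\<dots> = (\<Sum>k. \<Sum>n. h n k)" by (simp add: nn_integral_count_space_nat)
  finally show ?thesis .
qed

lemma norm_integral_le_nn:
  fixes g :: "'a \<Rightarrow> 'b::{banach, second_countable_topology}"
  shows "ennreal (norm (integral\<^sup>L M g)) \<le> (\<integral>\<^sup>+x. ennreal (norm (g x)) \<partial>M)"
proof (cases "integrable M g")
  case True
  then show ?thesis by (rule integral_norm_bound_ennreal)
next
  case False
  then show ?thesis by (simp add: not_integrable_integral_eq)
qed

lemma p0_nonneg: "p0 \<alpha> x y z \<ge> 0" if "\<alpha> \<ge> 1/2"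
  unfolding p0_def BK_kernel_def using CGamma_nonneg[OF that] by simp

lemma single_le_suminf: "(f::nat \<Rightarrow> ennreal) k \<le> (\<Sum>n. f n)"
  using sum_le_suminf[of f "{k}"] by auto

lemma step1:
  fixes f :: "real \<Rightarrow> complex"
  assumes a: "\<alpha> \<ge> 1/2" and y: "y > 0" and x: "x \<ge> 0"
  shows "ennreal (cmod (BK_transl \<alpha> y f x)) \<le>
     (\<Sum>k. (SUP t\<in>{real (Suc k) - 1..<real (Suc k)}. ennreal (cmod (f t))) * nu \<alpha> x y (Suc k))"
    (is "_ \<le> (\<Sum>k. ?a k * _)")
proof (cases "x = 0")
  case True
  define k0 where "k0 = nat \<lfloor>y\<rfloor>"
  have yin: "y \<in> {real (Suc k0) - 1..<real (Suc k0)}" unfolding k0_def using y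
    by (auto simp: of_nat_nat) linarith
  have "ennreal (cmod (BK_transl \<alpha> y f x)) = ennreal (cmod (f y))"
    using True unfolding BK_transl_def by simp
  also have "\<dots> \<le> ?a k0" using yin by (intro SUP_upper) auto
  also have "\<dots> = ?a k0 * nu \<alpha> x y (Suc k0)" using True yin unfolding nu_def by simp
  also have "\<dots> \<le> (\<Sum>k. ?a k * nu \<alpha> x y (Suc k))" by (rule single_le_suminf)
  finally show ?thesis .
next
  case False
  then have xp: "x > 0" using x by simp
  define A where "A = {\<bar>x-y\<bar><..<x+y}"
  define g where "g k z = ennreal (indicator (A \<inter> {real (Suc k) - 1..<real (Suc k)}) z * p0 \<alpha> x y z)" for k z
  have gm: "g k \<in> borel_measurable lborel" for k unfolding g_def A_def by measurable
  have "BK_transl \<alpha> y f x = (LBINT z=\<bar>x - y\<bar>..x + y. complex_of_real (p0 \<alpha> x y z) * f z)"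
    using xp y unfolding BK_transl_def p0_def by simp
  also have "\<dots> = (LINT z|lborel. indicator A z *\<^sub>R (complex_of_real (p0 \<alpha> x y z) * f z))"
  proof -
    have le: "ereal \<bar>x-y\<bar> \<le> ereal (x+y)" using xp y by auto
    show ?thesis unfolding A_def interval_lebesgue_integral_le_eq[OF le]
      by (simp add: set_lebesgue_integral_def)
  qed
  finally have eq: "BK_transl \<alpha> y f x = (LINT z|lborel. indicator A z *\<^sub>R (complex_of_real (p0 \<alpha> x y z) * f z))" .
  have "ennreal (cmod (BK_transl \<alpha> y f x)) \<le> (\<integral>\<^sup>+z. ennreal (norm (indicator A z *\<^sub>R (complex_of_real (p0 \<alpha> x y z) * f z))) \<partial>lborel)"
    unfolding eq by (rule norm_integral_le_nn)
  also have "\<dots> \<le> (\<integral>\<^sup>+z. (\<Sum>k. ?a k * g k z) \<partial>lborel)"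
  proof (rule nn_integral_mono)
    fix z
    show "ennreal (norm (indicator A z *\<^sub>R (complex_of_real (p0 \<alpha> x y z) * f z))) \<le> (\<Sum>k. ?a k * g k z)"
    proof (cases "z \<in> A")
      case False
      then show ?thesis by simp
    next
      case True
      then have z0: "z > 0" unfolding A_def using abs_ge_zero[of "x-y"] by auto
      define k where "k = nat \<lfloor>z\<rfloor>"
      have zin: "z \<in> {real (Suc k) - 1..<real (Suc k)}" unfolding k_def using z0
        by (auto simp: of_nat_nat) linarith
      have p: "p0 \<alpha> x y z \<ge> 0" by (rule p0_nonneg[OF a])
      have "ennreal (norm (indicator A z *\<^sub>R (complex_of_real (p0 \<alpha> x y z) * f z))) = ennreal (p0 \<alpha> x y z) * ennreal (cmod (f z))"
        using True p by (simp add: norm_mult ennreal_mult)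
      also have "\<dots> \<le> ennreal (p0 \<alpha> x y z) * ?a k"
        using zin by (intro mult_left_mono SUP_upper) auto
      also have "\<dots> = ?a k * g k z" unfolding g_def using True zin by (simp add: mult.commute)
      also have "\<dots> \<le> (\<Sum>k. ?a k * g k z)" by (rule single_le_suminf[where f="\<lambda>k. ?a k * g k z"])
      finally show ?thesis .
    qed
  qed
  also have "\<dots> = (\<Sum>k. \<integral>\<^sup>+z. ?a k * g k z \<partial>lborel)"
    by (rule nn_integral_suminf) (use gm in auto)
  also have "\<dots> = (\<Sum>k. ?a k * nu \<alpha> x y (Suc k))"
    by (simp add: nn_integral_cmult gm nu_def g_def A_def xp[THEN less_imp_neq, symmetric])
  finally show ?thesis .
qed


lemma Cc_ge1: "\<alpha> \<ge> 1/2 \<Longrightarrow> Cc \<alpha> \<ge> 1"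
  unfolding Cc_def using Kc_facts by (simp add: zero_le_mult_iff) (smt (verit) powr_ge_zero)

lemma main_pos:
  fixes f :: "real \<Rightarrow> complex"
  assumes a: "\<alpha> \<ge> 1/2" and y: "y > 0"
  shows "BK_norm \<alpha> (BK_transl \<alpha> y f) \<le> ennreal (Cc \<alpha>) * BK_norm \<alpha> f"
proof -
  define I where "I n = {real (Suc n) - 1..<real (Suc n)}" for n
  define av where "av k = (SUP t\<in>I k. ennreal (cmod (f t)))" for k
  define om where "om n = ennreal (BK_omega \<alpha> (Suc n))" for n
  define G where "G n k = (SUP x\<in>I n. nu \<alpha> x y (Suc k))" for n k
  have "BK_norm \<alpha> (BK_transl \<alpha> y f) = (\<Sum>n. om n * (SUP x\<in>I n. ennreal (cmod (BK_transl \<alpha> y f x))))"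
    unfolding BK_norm_def om_def I_def ..
  also have "\<dots> \<le> (\<Sum>n. \<Sum>k. av k * (om n * G n k))"
  proof (intro suminf_le summableI)
    fix n
    have "(SUP x\<in>I n. ennreal (cmod (BK_transl \<alpha> y f x))) \<le> (\<Sum>k. av k * G n k)"
    proof (rule SUP_least)
      fix x assume x: "x \<in> I n"
      then have x0: "x \<ge> 0" unfolding I_def by auto
      have "ennreal (cmod (BK_transl \<alpha> y f x)) \<le> (\<Sum>k. av k * nu \<alpha> x y (Suc k))"
        unfolding av_def I_def by (rule step1[OF a y x0])
      also have "\<dots> \<le> (\<Sum>k. av k * G n k)"
        unfolding G_def using x by (intro suminf_le summableI mult_left_mono SUP_upper) auto
      finally show "ennreal (cmod (BK_transl \<alpha> y f x)) \<le> (\<Sum>k. av k * G n k)" .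
    qed
    then have "om n * (SUP x\<in>I n. ennreal (cmod (BK_transl \<alpha> y f x))) \<le> om n * (\<Sum>k. av k * G n k)"
      by (rule mult_left_mono) simp
    also have "\<dots> = (\<Sum>k. av k * (om n * G n k))"
      by (simp add: ennreal_suminf_cmult[symmetric] ac_simps)
    finally show "om n * (SUP x\<in>I n. ennreal (cmod (BK_transl \<alpha> y f x))) \<le> (\<Sum>k. av k * (om n * G n k))" .
  qed
  also have "\<dots> = (\<Sum>k. \<Sum>n. av k * (om n * G n k))" by (rule suminf_swap_ennreal)
  also have "\<dots> = (\<Sum>k. av k * (\<Sum>n. om n * G n k))" by simp
  also have "\<dots> \<le> (\<Sum>k. av k * ennreal (Cc \<alpha> * BK_omega \<alpha> (Suc k)))"
  proof (intro suminf_le summableI mult_left_mono)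
    fix k
    show "(\<Sum>n. om n * G n k) \<le> ennreal (Cc \<alpha> * BK_omega \<alpha> (Suc k))"
      unfolding om_def G_def I_def by (rule sum_bound[OF a y]) simp
  qed simp
  also have "\<dots> = ennreal (Cc \<alpha>) * (\<Sum>k. ennreal (BK_omega \<alpha> (Suc k)) * av k)"
    using Cc_ge1[OF a] by (simp add: ennreal_mult' ennreal_suminf_cmult[symmetric] ac_simps)
  also have "\<dots> = ennreal (Cc \<alpha>) * BK_norm \<alpha> f"
    unfolding BK_norm_def av_def I_def ..
  finally show ?thesis .
qed

theorem mainTheorem5:
  fixes \<alpha> :: real
  assumes "\<alpha> \<ge> 1/2"
  shows "\<exists>C>0. \<forall>f y. f \<in> borel_measurable lebesgue \<and> BK_norm \<alpha> f < \<infinity> \<and> y \<ge> 0 \<longrightarrow>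
           BK_norm \<alpha> (BK_transl \<alpha> y f) \<le> ennreal C * BK_norm \<alpha> f"
proof (intro exI[of _ "Cc \<alpha>"] conjI allI impI)
  show "Cc \<alpha> > 0" using Cc_ge1[OF assms] by simp
  fix f :: "real \<Rightarrow> complex" and y :: real
  assume h: "f \<in> borel_measurable lebesgue \<and> BK_norm \<alpha> f < \<infinity> \<and> y \<ge> 0"
  show "BK_norm \<alpha> (BK_transl \<alpha> y f) \<le> ennreal (Cc \<alpha>) * BK_norm \<alpha> f"
  proof (cases "y = 0")
    case True
    have "BK_transl \<alpha> y f = f" using True unfolding BK_transl_def by (auto simp: fun_eq_iff)
    then have "BK_norm \<alpha> (BK_transl \<alpha> y f) = 1 * BK_norm \<alpha> f" by simp
    also have "\<dots> \<le> ennreal (Cc \<alpha>) * BK_norm \<alpha> f"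
      using Cc_ge1[OF assms] by (intro mult_right_mono) auto
    finally show ?thesis .
  next
    case False
    then show ?thesis using h main_pos[OF assms] by simp
  qed
qed

end
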